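(* There is a constant $C>0$ (depending only on $d_{\min}$ and $d_{\max}$) such that for all sufficiently large $n$, for every target set size $t$ and every choice of out-degrees, and for all $k$ with $(1-\frac{1}{e^2})n\le k\le n-1$, the probability that the reverse reachable set of $B$ has exactly $k$ vertices is at most $\frac{C}{n^2}$; i.e., it is $O(\frac{1}{n^2})$.
   Context: Random graph model: $V$ is a set of $n$ vertices, $B\subseteq V$ a target set with $|B|=t$, each $v\in V$ has a prescribed out-degree $d_v$ with $2\le d_{\min}\le d_v\le d_{\max}$ (constants independent of $n$), and for each $v$ independently its out-neighbour set is chosen uniformly at random among all $d_v$-element subsets of $V$. The reverse reachable set of $B$ is the set of vertices having a directed path to a vertex of $B$. *)

theory Defs
  imports "HOL-Probability.Probability"
begin

text \<open>Vertex set V = {..<n}. An out-neighbourhood assignment is a function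
  N :: nat => nat set; vertices outside V get the empty set (default of Pi_pmf).\<close>

definition out_nbhd_pmf :: "nat \<Rightarrow> nat \<Rightarrow> nat set pmf" where
  "out_nbhd_pmf n dv = pmf_of_set {S. S \<subseteq> {..<n} \<and> card S = dv}"

definition random_digraph :: "nat \<Rightarrow> (nat \<Rightarrow> nat) \<Rightarrow> (nat \<Rightarrow> nat set) pmf" where
  "random_digraph n d = Pi_pmf {..<n} {} (\<lambda>v. out_nbhd_pmf n (d v))"

definition edges :: "nat \<Rightarrow> (nat \<Rightarrow> nat set) \<Rightarrow> (nat \<times> nat) set" where
  "edges n N = {(u, w). u < n \<and> w \<in> N u}"

definition rev_reach :: "nat \<Rightarrow> (nat \<Rightarrow> nat set) \<Rightarrow> nat set \<Rightarrow> nat set" where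
  "rev_reach n N B = {u. u < n \<and> (\<exists>b\<in>B. (u, b) \<in> (edges n N)\<^sup>*)}"

end

theory Submission
  imports Defs
begin

lemma fact_exp_bound: "(real m)^m \<le> exp 1 ^ m * fact m"
proof -
  have s: "summable (\<lambda>k. real m ^ k / fact k)"
    using exp_converges[of "real m"] by (simp add: sums_iff divide_inverse mult.commute)
  have "real m ^ m / fact m = sum (\<lambda>k. real m ^ k / fact k) {m}" by simp
  also have "\<dots> \<le> (\<Sum>k. real m ^ k / fact k)"
    by (rule sum_le_suminf[OF s]) auto
  also have "\<dots> = exp (real m)"
    using exp_converges[of "real m"] by (simp add: sums_iff divide_inverse mult.commute)
  also have "\<dots> = exp 1 ^ m" by (metis exp_of_nat_mult mult.right_neutral)
  finally show ?thesis by (simp add: divide_le_eq)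
qed

lemma sq_le_pow2: "(m::nat)^2 \<le> 2 * 2^m"
proof (induction m)
  case 0 then show ?case by simp
next
  case (Suc m)
  show ?case
  proof (cases "m < 3")
    case True then show ?thesis by (auto simp: less_Suc_eq numeral_3_eq_3 power2_eq_square)
  next
    case False
    then have "3*m \<le> m*m" by (intro mult_right_mono) auto
    then have "Suc (m+m) \<le> m*m" using False by linarith
    then have "(Suc m)^2 \<le> 2 * m^2" by (simp add: power2_eq_square)
    then show ?thesis using Suc by simp
  qed
qed

lemma sq_le_exp: "(real m)^2 \<le> 2 * exp 1 ^ m"
proof -
  have "(real m)^2 \<le> 2 * 2^m" using sq_le_pow2[of m] by (metis of_nat_le_iff of_nat_mult of_nat_numeral of_nat_power)
  also have "\<dots> \<le> 2 * exp 1 ^ m"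
    using exp_ge_add_one_self[of 1] by (intro mult_left_mono power_mono) auto
  finally show ?thesis .
qed

lemma analytic:
  assumes m2: "2 \<le> m" and mn: "exp 2 * real m \<le> real n"
  shows "real (n choose m) * (real m / real n)^(2*m) \<le> 2 * exp 4 / (real n)^2"
proof -
  let ?e = "exp (1::real)"
  have npos: "real n > 0" using mn m2
    by (smt (verit) exp_gt_zero mult_pos_pos of_nat_0_less_iff zero_less_numeral less_le_trans)
  have mpos: "real m > 0" using m2 by simp
  have c1: "real (n choose m) \<le> real n ^ m / fact m"
    using binomial_fact_pow[of n m]
    by (simp add: le_divide_eq) (metis of_nat_fact of_nat_le_iff of_nat_mult of_nat_power)
  have "real (n choose m) * (real m / real n)^(2*m) \<le> real n ^ m / fact m * (real m / real n)^(2*m)"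
    by (intro mult_right_mono c1) auto
  also have "\<dots> = (real m ^ m / fact m) * (real m / real n)^m"
    using npos by (simp add: power_mult power_divide power2_eq_square power_mult_distrib field_simps)
  also have "\<dots> \<le> ?e ^ m * (real m / real n)^m"
    using fact_exp_bound[of m] by (intro mult_right_mono) (auto simp: divide_le_eq)
  also have "\<dots> = (?e * real m / real n)^m" by (simp add: power_mult_distrib power_divide)
  finally have A: "real (n choose m) * (real m / real n)^(2*m) \<le> (?e * real m / real n)^m" .
  define x where "x = ?e * real m / real n"
  have x0: "0 \<le> x" using npos mpos by (simp add: x_def)
  have e2: "exp 2 = ?e * ?e" by (metis exp_add one_add_one)
  have x1: "x \<le> 1 / ?e" using mn npos
    by (simp add: x_def e2 field_simps)
  have "x ^ m = x^2 * x^(m-2)" using m2 by (metis le_add_diff_inverse power_add)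
  also have "\<dots> \<le> x^2 * (1/?e)^(m-2)"
    using x0 x1 by (intro mult_left_mono power_mono) auto
  also have "\<dots> = ?e^2 * real m ^ 2 / real n ^ 2 * (1/?e)^(m-2)"
    by (simp add: x_def power_mult_distrib power_divide)
  also have "(1/?e)^(m-2) = ?e^2 / ?e^m"
    using m2 by (simp add: power_divide power_diff)
  also have "?e^2 * real m ^ 2 / real n ^ 2 * (?e^2 / ?e^m) = ?e^4 * (real m^2 / ?e^m) / real n^2"
    by (simp add: field_simps power_add[symmetric])
  also have "\<dots> \<le> ?e^4 * 2 / real n^2"
    using sq_le_exp[of m] npos by (intro divide_right_mono mult_left_mono) (auto simp: divide_le_eq)
  also have "?e^4 = exp 4" by (metis exp_of_nat_mult mult.right_neutral of_nat_numeral)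
  finally show ?thesis using A by (simp add: x_def mult.commute)
qed

lemma A_props:
  assumes "d \<le> n"
  shows "{X. X \<subseteq> {..<n} \<and> card X = d} \<noteq> {}" "finite {X. X \<subseteq> {..<n} \<and> card X = d}"
proof -
  show fin: "finite {X. X \<subseteq> {..<n} \<and> card X = d}" by (rule finite_subset[of _ "Pow {..<n}"]) auto
  have "card {X. X \<subseteq> {..<n} \<and> card X = d} = n choose d" using n_subsets[of "{..<n}" d] by simp
  then show "{X. X \<subseteq> {..<n} \<and> card X = d} \<noteq> {}" using assms
    by (metis card.empty zero_less_binomial not_less0)
qed

lemma single_prob:
  assumes S: "S \<subseteq> {..<n}" and dn: "d \<le> n"
  shows "measure_pmf.prob (out_nbhd_pmf n d) {X. X \<subseteq> S} = real (card S choose d) / real (n choose d)"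
proof -
  define A where "A = {X. X \<subseteq> {..<n} \<and> card X = d}"
  have fin: "finite A" unfolding A_def by (rule finite_subset[of _ "Pow {..<n}"]) auto
  have cA: "card A = n choose d" unfolding A_def using n_subsets[of "{..<n}" d] by simp
  have ne: "A \<noteq> {}" using cA dn by (metis card.empty zero_less_binomial not_less0 less_irrefl neq0_conv)
  have "A \<inter> {X. X \<subseteq> S} = {X. X \<subseteq> S \<and> card X = d}" using S by (auto simp: A_def)
  moreover have "card {X. X \<subseteq> S \<and> card X = d} = card S choose d"
    using S by (intro n_subsets) (auto intro: finite_subset)
  ultimately show ?thesis
    unfolding out_nbhd_pmf_def A_def[symmetric] using measure_pmf_of_set[OF ne fin] cA by simp
qed

lemma ratio_bound:
  assumes "m \<le> n" "d \<le> n"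
  shows "real (m choose d) / real (n choose d) \<le> (real m / real n)^d"
proof (cases "d \<le> m")
  case False then show ?thesis by (simp add: binomial_eq_0 not_le)
next
  case True
  have "real (m choose d) / real (n choose d) =
     (\<Prod>i = 0..<d. real (m - i) / real (d - i)) / (\<Prod>i = 0..<d. real (n - i) / real (d - i))"
    using True assms by (simp add: binomial_altdef_of_nat)
  also have "\<dots> = (\<Prod>i = 0..<d. (real (m - i) / real (d - i)) / (real (n - i) / real (d - i)))"
    by (rule prod_dividef[symmetric])
  also have "\<dots> \<le> (\<Prod>i = 0..<d. real m / real n)"
  proof (rule prod_mono, safe)
    fix i assume i: "i \<in> {0..<d}"
    then have "i < d" "d - i > 0" "n - i > 0" using assms True by auto
    then have eq: "(real (m - i) / real (d - i)) / (real (n - i) / real (d - i)) = real (m - i) / real (n - i)"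
      by simp
    show "0 \<le> (real (m - i) / real (d - i)) / (real (n - i) / real (d - i))" by simp
    have "real (m - i) * real n \<le> real m * real (n - i)"
      using \<open>i < d\<close> True assms by (simp add: of_nat_diff algebra_simps mult_left_mono)
    then show "(real (m - i) / real (d - i)) / (real (n - i) / real (d - i)) \<le> real m / real n"
      unfolding eq using \<open>n - i > 0\<close> assms \<open>i<d\<close> by (simp add: divide_le_eq field_simps)
  qed
  also have "\<dots> = (real m / real n)^d" by simp
  finally show ?thesis .
qed

lemma factor_bound:
  assumes S: "S \<subseteq> {..<n}" and dn: "d \<le> n" and d2: "2 \<le> d"
  shows "measure_pmf.prob (out_nbhd_pmf n d) {X. X \<subseteq> S} \<le> (if card S < 2 then 0 else (real (card S) / real n)^2)"
proof -
  have cS: "card S \<le> n" using S by (metis card_lessThan card_mono finite_lessThan)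
  show ?thesis
  proof (cases "card S < 2")
    case True
    then show ?thesis using single_prob[OF S dn] d2 by (simp add: binomial_eq_0)
  next
    case False
    have "measure_pmf.prob (out_nbhd_pmf n d) {X. X \<subseteq> S} \<le> (real (card S) / real n)^d"
      using single_prob[OF S dn] ratio_bound[OF cS dn] by simp
    also have "\<dots> \<le> (real (card S) / real n)^2"
      using cS d2 by (intro power_decreasing) (auto simp: divide_le_eq)
    finally show ?thesis using False by simp
  qed
qed

theorem lemma18:
  fixes dmin dmax :: nat
  assumes "2 \<le> dmin" and "dmin \<le> dmax"
  shows "\<exists>C::real. C > 0 \<and> (\<exists>N0::nat. \<forall>n\<ge>N0. \<forall>(B::nat set) (d::nat \<Rightarrow> nat) (k::nat).
     B \<subseteq> {..<n} \<longrightarrow> (\<forall>v<n. dmin \<le> d v \<and> d v \<le> dmax) \<longrightarrow>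
     (1 - 1 / exp 2) * real n \<le> real k \<longrightarrow> k \<le> n - 1 \<longrightarrow>
     measure_pmf.prob (random_digraph n d) {N. card (rev_reach n N B) = k} \<le> C / (real n)^2)"
proof -
  define C where "C = (2 * exp 4 :: real)"
  have Cpos: "C > 0" by (simp add: C_def)
  have main: "measure_pmf.prob (random_digraph n d) {N. card (rev_reach n N B) = k} \<le> C / (real n)^2"
    if n: "n \<ge> dmax + 1" and B: "B \<subseteq> {..<n}" and dv: "\<forall>v<n. dmin \<le> d v \<and> d v \<le> dmax"
       and k1: "(1 - 1 / exp 2) * real n \<le> real k" and k2: "k \<le> n - 1" for n B d k
  proof -
    define m where "m = n - k"
    define p where "p = random_digraph n d"
    define F where "F = {S. S \<subseteq> {..<n} \<and> card S = m}"
    define E where "E S = Pi {..<n} (\<lambda>v. if v \<in> S then {X. X \<subseteq> S} else UNIV)" for S :: "nat set"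
    have npos: "n > 0" using n by simp
    have m1: "1 \<le> m" using k2 npos by (simp add: m_def)
    have rm: "real m = real n - real k" using k2 by (simp add: m_def of_nat_diff)
    have "real n - real n / exp 2 \<le> real k" using k1 by (simp add: algebra_simps)
    then have "real m \<le> real n / exp 2" using rm by linarith
    then have mn: "exp 2 * real m \<le> real n" by (simp add: pos_le_divide_eq mult.commute)
    have dn: "\<And>v. v < n \<Longrightarrow> d v \<le> n" using dv n by force
    have d2: "\<And>v. v < n \<Longrightarrow> 2 \<le> d v" using dv assms(1) by force
    have supp: "N v \<subseteq> {..<n}" if N: "N \<in> set_pmf p" and v: "v < n" for N v
    proof -
      have "N \<in> PiE_dflt {..<n} {} (set_pmf \<circ> (\<lambda>v. out_nbhd_pmf n (d v)))"
        using N unfolding p_def random_digraph_def set_Pi_pmf[OF finite_lessThan] .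
      then have "N v \<in> set_pmf (out_nbhd_pmf n (d v))"
        using v unfolding PiE_dflt_def by simp
      also have "set_pmf (out_nbhd_pmf n (d v)) = {S. S \<subseteq> {..<n} \<and> card S = d v}"
        unfolding out_nbhd_pmf_def using A_props[OF dn[OF v]] by (intro set_pmf_of_set) auto
      finally show "N v \<subseteq> {..<n}" by auto
    qed
    have incl: "{N. card (rev_reach n N B) = k} \<inter> set_pmf p \<subseteq> (\<Union>S\<in>F. E S)"
    proof
      fix N assume "N \<in> {N. card (rev_reach n N B) = k} \<inter> set_pmf p"
      then have cR: "card (rev_reach n N B) = k" and N: "N \<in> set_pmf p" by auto
      define R where "R = rev_reach n N B"
      define S where "S = {..<n} - R"
      have RV: "R \<subseteq> {..<n}" by (auto simp: R_def rev_reach_def)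
      have "card S = n - card R" unfolding S_def
        using card_Diff_subset[OF finite_subset[OF RV finite_lessThan] RV] by simp
      then have "card S = m" using cR by (simp add: m_def R_def)
      hence "S \<in> F" by (auto simp: F_def S_def)
      moreover have "N \<in> E S"
        unfolding E_def
      proof (rule Pi_I)
        fix v assume v: "v \<in> {..<n}"
        show "N v \<in> (if v \<in> S then {X. X \<subseteq> S} else UNIV)"
        proof (cases "v \<in> S")
          case True
          have "N v \<subseteq> S"
          proof
            fix w assume w: "w \<in> N v"
            have wn: "w < n" using supp[OF N] v w by auto
            have "w \<notin> R"
            proof
              assume "w \<in> R"
              then obtain b where b: "b \<in> B" "(w, b) \<in> (edges n N)\<^sup>*" by (auto simp: R_def rev_reach_def)
              have "(v, w) \<in> edges n N" using v w by (auto simp: edges_def)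
              hence "(v, b) \<in> (edges n N)\<^sup>*" using b(2) by (rule converse_rtrancl_into_rtrancl)
              hence "v \<in> R" using v b by (auto simp: R_def rev_reach_def)
              thus False using True by (auto simp: S_def)
            qed
            thus "w \<in> S" using wn by (auto simp: S_def)
          qed
          thus ?thesis using True by simp
        qed simp
      qed
      ultimately show "N \<in> (\<Union>S\<in>F. E S)" by blast
    qed
    have finF: "finite F" unfolding F_def by (rule finite_subset[of _ "Pow {..<n}"]) auto
    have cF: "card F = n choose m" unfolding F_def using n_subsets[of "{..<n}" m] by simp
    define g where "g = (if m < 2 then 0 else (real m / real n)^2)"
    have g0: "0 \<le> g" by (simp add: g_def)
    have ES: "measure_pmf.prob p (E S) \<le> g ^ m" if S: "S \<in> F" for S
    proof -
      have "measure_pmf.prob p (E S) = (\<Prod>v\<in>{..<n}. measure_pmf.prob (out_nbhd_pmf n (d v)) (if v \<in> S then {X. X \<subseteq> S} else UNIV))"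
        unfolding p_def random_digraph_def E_def by (rule measure_Pi_pmf_Pi) simp
      also have "\<dots> \<le> (\<Prod>v\<in>{..<n}. if v \<in> S then g else 1)"
      proof (rule prod_mono)
        fix v assume v: "v \<in> {..<n}"
        have "measure_pmf.prob (out_nbhd_pmf n (d v)) (if v \<in> S then {X. X \<subseteq> S} else UNIV) \<le> (if v \<in> S then g else 1)"
          using factor_bound[of S n "d v"] S d2[of v] dn[of v] v by (auto simp: F_def g_def)
        then show "0 \<le> measure_pmf.prob (out_nbhd_pmf n (d v)) (if v \<in> S then {X. X \<subseteq> S} else UNIV) \<and>
           measure_pmf.prob (out_nbhd_pmf n (d v)) (if v \<in> S then {X. X \<subseteq> S} else UNIV) \<le> (if v \<in> S then g else 1)"
          by simp
      qed
      also have "\<dots> = g ^ m" using S by (simp add: F_def prod.If_cases Int_absorb1)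
      finally show ?thesis .
    qed
    have "measure_pmf.prob p {N. card (rev_reach n N B) = k}
        = measure_pmf.prob p ({N. card (rev_reach n N B) = k} \<inter> set_pmf p)"
      by (simp add: measure_Int_set_pmf)
    also have "\<dots> \<le> measure_pmf.prob p (\<Union>S\<in>F. E S)"
      by (rule measure_pmf.finite_measure_mono[OF incl]) simp
    also have "\<dots> \<le> (\<Sum>S\<in>F. measure_pmf.prob p (E S))" by (rule measure_UNION_le[OF finF]) simp
    also have "\<dots> \<le> (\<Sum>S\<in>F. g^m)" by (rule sum_mono[OF ES])
    also have "\<dots> = real (n choose m) * g^m" using cF by simp
    also have "\<dots> \<le> C / real n ^2"
    proof (cases "m < 2")
      case True
      then have "m = 1" using m1 by simp
      then show ?thesis using Cpos by (simp add: g_def)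
    next
      case False
      then have gm: "g^m = (real m / real n)^(2*m)" by (simp add: g_def power_mult)
      have m2: "2 \<le> m" using False by simp
      show ?thesis unfolding gm C_def by (rule analytic[OF m2 mn])
    qed
    finally show ?thesis unfolding p_def .
  qed
  show ?thesis
    apply (rule exI[of _ C], rule conjI[OF Cpos], rule exI[of _ "dmax + 1"])
    apply (intro allI impI)
    apply (rule main)
        apply assumption+
    done
qed

end
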